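(* Let $k\geq 3$, $t,q\geq k-1$, $\chi>\binom{q}{k-1}$ and $n\geq 3(k-1)$ be integers with $n\equiv 0\pmod{k-1}$. Let $H$ be the $k$-graph on vertex set $A_1\sqcup\dots\sqcup A_\chi$, where $|A_i|>(\chi-1)(k-2)+\max\{\tau(k-1,t),q\}$ for all $i\in[\chi-1]$ and $|A_\chi|=t$, whose edges are all $k$-subsets $e$ of the vertex set such that $|e\cap A_i|=k-1$ for some $i\in[\chi]$. Then $R(C^{(k)}_{n,1},H)>(\chi-1)(n-1)+\max\{\tau(k-1,t),q\}$.
   Context: A $k$-graph is a $k$-uniform hypergraph. $R(G,H)$ is the least $N$ such that every red/blue colouring of the edges of $K^{(k)}_N$ contains a red copy of $G$ or a blue copy of $H$. For $n=q'(k-1)$, the loose cycle $C^{(k)}_{n,1}$ has vertices $v_1,\dots,v_n$ and edges $\{v_{(i-1)(k-1)+1},\dots,v_{i(k-1)+1}\}$ for $i\in[q']$, with $v_{n+1}=v_1$. For integers $j,\alpha\ge1$, $\tau(j,\alpha)$ is the largest $N$ such that some $j$-uniform hypergraph on $N$ vertices has independence number less than $\alpha$ and no two edges meeting in exactly one vertex. *)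

theory Defs
  imports Main
begin

text \<open>The complete k-graph on N vertices is taken on vertex set {..<N}; a red/blue
  colouring of its edges is a function c :: nat set \<Rightarrow> bool (True = red, False = blue),
  of which only the values on k-subsets of {..<N} matter.\<close>

definition copy_in :: "nat \<Rightarrow> nat \<Rightarrow> (nat set \<Rightarrow> bool) \<Rightarrow> bool \<Rightarrow> 'a set \<times> 'a set set \<Rightarrow> bool" where
  "copy_in k N c col G \<longleftrightarrow>
     (\<exists>f. inj_on f (fst G) \<and> f ` fst G \<subseteq> {..<N} \<and>
          (\<forall>e\<in>snd G. card (f ` e) = k \<and> c (f ` e) = col))"

definition ramsey_arrows :: "nat \<Rightarrow> nat \<Rightarrow> 'a set \<times> 'a set set \<Rightarrow> 'b set \<times> 'b set set \<Rightarrow> bool" where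
  "ramsey_arrows k N G H \<longleftrightarrow> (\<forall>c. copy_in k N c True G \<or> copy_in k N c False H)"

definition ramsey_number :: "nat \<Rightarrow> 'a set \<times> 'a set set \<Rightarrow> 'b set \<times> 'b set set \<Rightarrow> nat" where
  "ramsey_number k G H = (LEAST N. ramsey_arrows k N G H)"

definition loose_cycle :: "nat \<Rightarrow> nat \<Rightarrow> nat set \<times> nat set set" where
  "loose_cycle k n =
    ({1..n},
     {(\<lambda>j. if j = n + 1 then 1 else j) ` {(i - 1) * (k - 1) + 1 .. i * (k - 1) + 1}
        | i. i \<in> {1 .. n div (k - 1)}})"

definition independent_set :: "'a set set \<Rightarrow> 'a set \<Rightarrow> bool" where
  "independent_set E I \<longleftrightarrow> (\<forall>e\<in>E. \<not> e \<subseteq> I)"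

definition independence_number :: "'a set \<Rightarrow> 'a set set \<Rightarrow> nat" where
  "independence_number V E = Max {card I | I. I \<subseteq> V \<and> independent_set E I}"

definition tau :: "nat \<Rightarrow> nat \<Rightarrow> nat" where
  "tau j \<alpha> = (GREATEST N. \<exists>E. E \<subseteq> {e. e \<subseteq> {..<N} \<and> card e = j} \<and>
        independence_number {..<N} E < \<alpha> \<and>
        (\<forall>e\<in>E. \<forall>e'\<in>E. e \<noteq> e' \<longrightarrow> card (e \<inter> e') \<noteq> 1))"

end

theory Submission imports Defs "HOL-Library.Ramsey" Complex_Main begin

lemma mult_cancel_aux: "(a::nat)*K \<le> b*K \<Longrightarrow> K \<ge> 1 \<Longrightarrow> a \<le> b"
  by simp

definition Pe :: "nat \<Rightarrow> nat \<Rightarrow> nat \<Rightarrow> nat set" where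
  "Pe K n i = (\<lambda>j. if j = n + 1 then 1 else j) ` {i*K+1 .. (i+1)*K+1}"

lemma Pe_mem:
  assumes K: "K \<ge> 1" and nL: "n = L*K" and L: "L \<ge> 2" and i: "i < L"
  shows "x \<in> Pe K n i \<longleftrightarrow> (i*K+1 \<le> x \<and> x \<le> (i+1)*K+1 \<and> x \<le> n) \<or> (x = 1 \<and> i = L-1)"
proof
  assume "x \<in> Pe K n i"
  then obtain j where j: "j \<in> {i*K+1 .. (i+1)*K+1}" "x = (if j = n + 1 then 1 else j)"
    unfolding Pe_def by blast
  have "(i+1)*K \<le> L*K" using i by (intro mult_le_mono1) simp
  show "(i*K+1 \<le> x \<and> x \<le> (i+1)*K+1 \<and> x \<le> n) \<or> (x = 1 \<and> i = L-1)"
  proof (cases "j = n+1")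
    case True
    then have "n+1 \<le> (i+1)*K+1" using j by simp
    then have "L*K \<le> (i+1)*K" using nL by simp
    then have "L \<le> i+1" using K by (rule mult_cancel_aux)
    then have "i = L-1" using i by linarith
    then show ?thesis using True j by simp
  next
    case False
    then show ?thesis using j \<open>(i+1)*K \<le> L*K\<close> nL by auto
  qed
next
  assume h: "(i*K+1 \<le> x \<and> x \<le> (i+1)*K+1 \<and> x \<le> n) \<or> (x = 1 \<and> i = L-1)"
  show "x \<in> Pe K n i"
  proof (cases "i*K+1 \<le> x \<and> x \<le> (i+1)*K+1 \<and> x \<le> n")
    case True
    then show ?thesis unfolding Pe_def by (intro image_eqI[of _ _ x]) auto
  next
    case False
    then have "x = 1" "i = L - 1" using h by auto
    then have "(i+1) = L" using i by simp
    then have "(i+1)*K+1 = n+1" using nL by simp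
    moreover have "i*K \<le> (i+1)*K" by simp
    ultimately show ?thesis unfolding Pe_def using \<open>x = 1\<close>
      by (intro image_eqI[of _ _ "n+1"]) auto
  qed
qed

lemma Pe_key:
  assumes K: "K \<ge> 1" and nL: "n = L*K" and L: "L \<ge> 2" and ii: "i < i'" "i' < L"
    and x: "x \<in> Pe K n i" "x \<in> Pe K n i'"
  shows "(x = (i+1)*K+1 \<and> i' = i+1) \<or> (x = 1 \<and> i = 0 \<and> i' = L-1)"
proof -
  have i: "i < L" using ii by simp
  note m1 = Pe_mem[OF K nL L i, of x] and m2 = Pe_mem[OF K nL L ii(2), of x]
  show ?thesis
  proof (cases "i'*K+1 \<le> x \<and> x \<le> (i'+1)*K+1 \<and> x \<le> n")
    case T2: True
    show ?thesis
    proof (cases "i*K+1 \<le> x \<and> x \<le> (i+1)*K+1 \<and> x \<le> n")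
      case True
      then have "i'*K \<le> (i+1)*K" using T2 by linarith
      then have "i' \<le> i+1" using K by (rule mult_cancel_aux)
      then have "i' = i+1" using ii by simp
      then show ?thesis using T2 True by simp
    next
      case False
      then have "x = 1 \<and> i = L-1" using m1 x by blast
      then show ?thesis using ii by simp
    qed
  next
    case F2: False
    then have x1: "x = 1" "i' = L-1" using m2 x by blast+
    show ?thesis
    proof (cases "i*K+1 \<le> x \<and> x \<le> (i+1)*K+1 \<and> x \<le> n")
      case True
      then have "i*K = 0" using x1 by simp
      then have "i = 0" using K by simp
      then show ?thesis using x1 by simp
    next
      case False
      then have "i = L-1" using m1 x by blast
      then show ?thesis using ii x1 by simp
    qed
  qed
qed


lemma Pe_inter:
  assumes K: "K \<ge> 1" and nL: "n = L*K" and L: "L \<ge> 3" and ii: "i < L" "i' < L" "i \<noteq> i'"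
  shows "card (Pe K n i \<inter> Pe K n i') \<le> 1"
proof -
  have L2: "L \<ge> 2" using L by simp
  have gen: "x = y" if "a < b" "b < L" "x \<in> Pe K n a" "x \<in> Pe K n b" "y \<in> Pe K n a" "y \<in> Pe K n b" for a b x y
  proof -
    note kx = Pe_key[OF K nL L2 that(1,2,3,4)] and ky = Pe_key[OF K nL L2 that(1,2,5,6)]
    show "x = y" using kx ky L by (elim disjE conjE) (simp, linarith, linarith, simp)
  qed
  have "\<forall>x\<in>Pe K n i \<inter> Pe K n i'. \<forall>y\<in>Pe K n i \<inter> Pe K n i'. x = y"
  proof (intro ballI)
    fix x y assume "x \<in> Pe K n i \<inter> Pe K n i'" "y \<in> Pe K n i \<inter> Pe K n i'"
    then show "x = y"
    proof (cases "i < i'")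
      case True
      then show ?thesis using gen[of i i' x y] ii \<open>x \<in> _\<close> \<open>y \<in> _\<close> by blast
    next
      case False
      then have "i' < i" using ii by simp
      then show ?thesis using gen[of i' i x y] ii \<open>x \<in> _\<close> \<open>y \<in> _\<close> by blast
    qed
  qed
  moreover have fin: "finite (Pe K n i \<inter> Pe K n i')" unfolding Pe_def by simp
  ultimately show ?thesis by (simp only: One_nat_def card_le_Suc0_iff_eq[OF fin])
qed


definition cpos :: "nat \<Rightarrow> nat \<Rightarrow> nat \<Rightarrow> nat" where
  "cpos K L i = (if i + 1 = L then 1 else (i+1)*K+1)"

lemma cpos_in:
  assumes K: "K \<ge> 1" and nL: "n = L*K" and L: "L \<ge> 2" and i: "i < L"
  shows "cpos K L i \<in> Pe K n i" "cpos K L i \<in> Pe K n ((i+1) mod L)"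
proof -
  show "cpos K L i \<in> Pe K n i"
  proof (cases "i+1 = L")
    case True
    then have "i = L-1" by simp
    then show ?thesis using Pe_mem[OF K nL L i, of 1] True by (simp add: cpos_def)
  next
    case False
    then have "i+1 < L" using i by simp
    then have "(i+2)*K \<le> L*K" by (intro mult_le_mono1) simp
    then have "(i+1)*K + K \<le> L*K" by (simp add: algebra_simps)
    then have "(i+1)*K+1 \<le> n" using K nL by linarith
    then show ?thesis using Pe_mem[OF K nL L i] False by (simp add: cpos_def)
  qed
  show "cpos K L i \<in> Pe K n ((i+1) mod L)"
  proof (cases "i+1 = L")
    case True
    have "0 < L" using L by simp
    then show ?thesis using Pe_mem[OF K nL L \<open>0 < L\<close>] True nL K by (simp add: cpos_def)
  next
    case False
    then have i1: "i+1 < L" using i by simp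
    then have "(i+2)*K \<le> L*K" by (intro mult_le_mono1) simp
    then have "(i+1)*K + K \<le> L*K" by (simp add: algebra_simps)
    then have "(i+1)*K+1 \<le> n" using K nL by linarith
    then show ?thesis using Pe_mem[OF K nL L i1] False i1 by (simp add: cpos_def)
  qed
qed

lemma cpos_inj:
  assumes K: "K \<ge> 1" and L: "L \<ge> 2"
  shows "inj_on (cpos K L) {..<L}"
proof (rule inj_onI)
  fix a b assume a: "a \<in> {..<L}" and b: "b \<in> {..<L}" and e: "cpos K L a = cpos K L b"
  consider "a+1 = L" "b+1 = L" | "a+1 = L" "b+1 \<noteq> L" | "a+1 \<noteq> L" "b+1 = L" | "a+1 \<noteq> L" "b+1 \<noteq> L"
    by blast
  then show "a = b"
  proof cases
    case 1 then show ?thesis by simp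
  next
    case 2 then show ?thesis using e K by (simp add: cpos_def)
  next
    case 3 then show ?thesis using e K by (simp add: cpos_def)
  next
    case 4
    then have "(a+1)*K = (b+1)*K" using e by (simp add: cpos_def)
    then show ?thesis using K by simp
  qed
qed

lemma Pe_cover:
  assumes K: "K \<ge> 1" and nL: "n = L*K" and L: "L \<ge> 2"
  shows "(\<Union>i<L. Pe K n i) = {1..n}"
proof
  show "(\<Union>i<L. Pe K n i) \<subseteq> {1..n}"
  proof
    fix x assume "x \<in> (\<Union>i<L. Pe K n i)"
    then obtain i where i: "i < L" "x \<in> Pe K n i" by blast
    show "x \<in> {1..n}" using Pe_mem[OF K nL L i(1), of x] i(2) nL L K by auto
  qed
  show "{1..n} \<subseteq> (\<Union>i<L. Pe K n i)"
  proof
    fix x assume x: "x \<in> {1..n}"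
    define i where "i = (x - 1) div K"
    have "i*K \<le> x - 1" unfolding i_def by (rule div_times_less_eq_dividend)
    moreover have "x - 1 = i*K + (x-1) mod K" unfolding i_def by simp
    moreover have "(x-1) mod K < K" using K by simp
    moreover have "(i+1)*K = i*K + K" by simp
    ultimately have "x - 1 < (i+1)*K" by linarith
    moreover note \<open>i*K \<le> x - 1\<close>
    ultimately have h: "i*K+1 \<le> x" "x \<le> (i+1)*K+1" using x by auto
    have "x - 1 < L*K" using x nL by auto
    then have "i < L" unfolding i_def using K by (simp add: div_less_iff_less_mult)
    then show "x \<in> (\<Union>i<L. Pe K n i)" using Pe_mem[OF K nL L \<open>i < L\<close>, of x] h x by auto
  qed
qed

lemma Pe_card:
  assumes K: "K \<ge> 1" and nL: "n = L*K" and L: "L \<ge> 2" and i: "i < L"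
  shows "card (Pe K n i) = K+1"
proof -
  have "inj_on (\<lambda>j. if j = n + 1 then 1 else j) {i*K+1 .. (i+1)*K+1}"
  proof (rule inj_onI)
    fix a b assume a: "a \<in> {i*K+1 .. (i+1)*K+1}" and b: "b \<in> {i*K+1 .. (i+1)*K+1}"
      and e: "(if a = n + 1 then 1 else a) = (if b = n + 1 then 1 else b)"
    have "1 \<notin> {i*K+1 .. (i+1)*K+1} \<or> n+1 \<notin> {i*K+1 .. (i+1)*K+1}"
    proof (rule ccontr)
      assume "\<not> ?thesis"
      then have "i*K = 0" "n \<le> (i+1)*K" by auto
      then have "i = 0" using K by simp
      then have "L*K \<le> 1*K" using \<open>n \<le> (i+1)*K\<close> nL by simp
      then have "L \<le> 1" using K by (rule mult_cancel_aux)
      then show False using L by simp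
    qed
    then show "a = b" using a b e by (auto split: if_splits)
  qed
  then have "card (Pe K n i) = card {i*K+1 .. (i+1)*K+1}" unfolding Pe_def by (rule card_image)
  then show ?thesis by simp
qed


lemma lc_fst: "fst (loose_cycle k n) = {1..n}" by (simp add: loose_cycle_def)

lemma lc_snd: "snd (loose_cycle k n) = Pe (k-1) n ` {..< n div (k-1)}"
proof -
  have "{(\<lambda>j. if j = n + 1 then 1 else j) ` {(i - 1) * (k - 1) + 1 .. i * (k - 1) + 1} | i. i \<in> {1 .. n div (k - 1)}}
        = Pe (k-1) n ` {..< n div (k-1)}" (is "?A = ?B")
  proof
    show "?A \<subseteq> ?B"
    proof
      fix x assume "x \<in> ?A"
      then obtain i where i: "i \<in> {1 .. n div (k - 1)}"
        "x = (\<lambda>j. if j = n + 1 then 1 else j) ` {(i - 1) * (k - 1) + 1 .. i * (k - 1) + 1}" by blast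
      then have "x = Pe (k-1) n (i-1)" unfolding Pe_def by simp
      moreover have "i - 1 < n div (k-1)" using i by auto
      ultimately show "x \<in> ?B" by blast
    qed
    show "?B \<subseteq> ?A"
    proof
      fix x assume "x \<in> ?B"
      then obtain i where i: "i < n div (k-1)" "x = Pe (k-1) n i" by blast
      then have "x = (\<lambda>j. if j = n + 1 then 1 else j) ` {(i + 1 - 1) * (k - 1) + 1 .. (i+1) * (k - 1) + 1}"
        unfolding Pe_def by simp
      moreover have "i + 1 \<in> {1 .. n div (k - 1)}" using i by auto
      ultimately show "x \<in> ?A" by blast
    qed
  qed
  then show ?thesis by (simp add: loose_cycle_def)
qed

definition cyc :: "nat \<Rightarrow> nat \<Rightarrow> nat \<Rightarrow> (nat set \<Rightarrow> bool) \<Rightarrow> nat \<Rightarrow> (nat \<Rightarrow> nat set) \<Rightarrow> (nat \<Rightarrow> nat) \<Rightarrow> bool" where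
  "cyc k n N c L E cc \<longleftrightarrow> L \<ge> 3 \<and> n = L*(k-1) \<and> (\<forall>i<L. c (E i) \<and> card (E i) = k) \<and>
     (\<forall>i<L. cc i \<in> E i \<and> cc i \<in> E ((i+1) mod L)) \<and> inj_on cc {..<L} \<and>
     (\<forall>i<L. \<forall>i'<L. i \<noteq> i' \<longrightarrow> card (E i \<inter> E i') \<le> 1) \<and>
     card (\<Union>i<L. E i) = n \<and> (\<Union>i<L. E i) \<subseteq> {..<N}"

lemma red_cycle_struct:
  assumes cp: "copy_in k N c True (loose_cycle k n)" and k: "k \<ge> 3"
    and nm: "n mod (k-1) = 0" and n3: "n \<ge> 3*(k-1)"
  shows "\<exists>L E cc. cyc k n N c L E cc"
proof -
  define K where "K = k - 1"
  define L where "L = n div K"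
  have K: "K \<ge> 1" using k K_def by simp
  have nL: "n = L*K" using nm div_mult_mod_eq[of n K] unfolding L_def K_def by simp
  have L3: "L \<ge> 3" unfolding L_def using n3 K K_def by (simp add: less_eq_div_iff_mult_less_eq)
  have L2: "L \<ge> 2" using L3 by simp
  obtain f where f: "inj_on f {1..n}" "f ` {1..n} \<subseteq> {..<N}"
    "\<forall>e\<in>Pe K n ` {..<L}. card (f ` e) = k \<and> c (f ` e) = True"
    using cp unfolding copy_in_def lc_fst lc_snd K_def L_def by blast
  define E where "E i = f ` Pe K n i" for i
  define cc where "cc i = f (cpos K L i)" for i
  have Psub: "Pe K n i \<subseteq> {1..n}" if "i < L" for i using Pe_cover[OF K nL L2] that by blast
  have c1: "\<forall>i<L. c (E i) \<and> card (E i) = k" using f(3) unfolding E_def by auto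
  have c2: "\<forall>i<L. cc i \<in> E i \<and> cc i \<in> E ((i+1) mod L)"
    using cpos_in[OF K nL L2] unfolding E_def cc_def by blast
  have c3: "inj_on cc {..<L}"
  proof (rule inj_onI)
    fix a b assume a: "a \<in> {..<L}" and b: "b \<in> {..<L}" and e: "cc a = cc b"
    have "cpos K L a \<in> {1..n}" "cpos K L b \<in> {1..n}"
      using cpos_in(1)[OF K nL L2] Psub a b by blast+
    then have "cpos K L a = cpos K L b" using e f(1) unfolding cc_def by (meson inj_onD)
    then show "a = b" using cpos_inj[OF K L2] a b by (meson inj_onD)
  qed
  have c4: "\<forall>i<L. \<forall>i'<L. i \<noteq> i' \<longrightarrow> card (E i \<inter> E i') \<le> 1"
  proof (intro allI impI)
    fix i i' assume ii: "i < L" "i' < L" "i \<noteq> i'"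
    have "E i \<inter> E i' = f ` (Pe K n i \<inter> Pe K n i')"
      unfolding E_def using inj_on_image_Int[OF f(1) Psub[OF ii(1)] Psub[OF ii(2)]] by simp
    moreover have "card (f ` (Pe K n i \<inter> Pe K n i')) \<le> card (Pe K n i \<inter> Pe K n i')"
      by (rule card_image_le) (simp add: Pe_def)
    ultimately show "card (E i \<inter> E i') \<le> 1" using Pe_inter[OF K nL L3 ii] by simp
  qed
  have U: "(\<Union>i<L. E i) = f ` {1..n}" unfolding E_def using Pe_cover[OF K nL L2] by blast
  have c5: "card (\<Union>i<L. E i) = n" unfolding U using f(1) by (simp add: card_image)
  have c6: "(\<Union>i<L. E i) \<subseteq> {..<N}" unfolding U using f(2) .
  have "cyc k n N c L E cc" unfolding cyc_def using L3 nL c1 c2 c3 c4 c5 c6 K_def by blast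
  then show ?thesis by blast
qed


definition Vp :: "nat \<Rightarrow> nat \<Rightarrow> nat \<Rightarrow> nat set" where
  "Vp m n j = {m + (j-1)*(n-1) ..< m + j*(n-1)}"

lemma Vp_W: "Vp m n j \<inter> {..<m} = {}" by (auto simp: Vp_def)

lemma Vp_W': "x \<in> Vp m n j \<Longrightarrow> x \<notin> {..<m}" by (auto simp: Vp_def)

lemma Vp_card: "j \<ge> 1 \<Longrightarrow> card (Vp m n j) = n - 1"
proof -
  assume j: "j \<ge> 1"
  obtain j' where j': "j = Suc j'" using j by (cases j) auto
  have "j*(n-1) = (j-1)*(n-1) + (n-1)" unfolding j' by simp
  then show ?thesis by (simp add: Vp_def)
qed

lemma Vp_finite: "finite (Vp m n j)" by (simp add: Vp_def)

lemma Vp_disj_lt: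
  assumes "1 \<le> j" "j < j'" shows "Vp m n j \<inter> Vp m n j' = {}"
proof -
  have "j \<le> j' - 1" using assms by simp
  then have h: "m + j*(n-1) \<le> m + (j'-1)*(n-1)" by (simp add: mult_le_mono1)
  show ?thesis unfolding Vp_def
  proof (rule equals0I)
    fix x assume "x \<in> {m + (j-1)*(n-1) ..< m + j*(n-1)} \<inter> {m + (j'-1)*(n-1) ..< m + j'*(n-1)}"
    then have "x < m + j*(n-1)" "m + (j'-1)*(n-1) \<le> x" by auto
    then show False using h by linarith
  qed
qed

lemma Vp_disj:
  assumes "1 \<le> j" "1 \<le> j'" "j \<noteq> j'" shows "Vp m n j \<inter> Vp m n j' = {}"
  using Vp_disj_lt[of j j' m n] Vp_disj_lt[of j' j m n] assms by (cases "j < j'") auto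

lemma Vp_same:
  assumes "j \<in> {1..C}" "j' \<in> {1..C}" "x \<in> Vp m n j" "x \<in> Vp m n j'" shows "j = j'"
  using Vp_disj[of j j' m n] assms by auto

lemma Vp_cover:
  assumes n: "n \<ge> 2" and x: "x < m + (C-1)*(n-1)"
  shows "x < m \<or> (\<exists>j\<in>{1..C-1}. x \<in> Vp m n j)"
proof (cases "x < m")
  case False
  define j where "j = (x - m) div (n-1) + 1"
  have "(j-1)*(n-1) \<le> x - m" unfolding j_def by (simp add: div_times_less_eq_dividend)
  moreover have "x - m = (j-1)*(n-1) + (x-m) mod (n-1)" unfolding j_def using div_mult_mod_eq[of "x-m" "n-1"] by simp
  moreover have "(x-m) mod (n-1) < n-1" using n by simp
  moreover have "j*(n-1) = (j-1)*(n-1) + (n-1)" unfolding j_def by simp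
  ultimately have "m + (j-1)*(n-1) \<le> x \<and> x < m + j*(n-1)" using False n by linarith
  then have "x \<in> Vp m n j" unfolding Vp_def by simp
  moreover have "j - 1 < C - 1"
  proof -
    have "x - m < (C-1)*(n-1)" using x False by simp
    then show ?thesis unfolding j_def using n by (simp add: div_less_iff_less_mult)
  qed
  then have "j \<in> {1..C-1}" unfolding j_def by simp
  ultimately show ?thesis by blast
qed simp


lemma cyc_mod_next: "(L::nat) > 0 \<Longrightarrow> ((a mod L) + 1) mod L = (a + 1) mod L"
  by (rule mod_add_left_eq)

lemma cyc_mod_ne:
  fixes i d L :: nat
  assumes "i < L" "0 < d" "d < L" shows "(i + d) mod L \<noteq> i"
proof (cases "i + d < L")
  case True
  then have "(i+d) mod L = i+d" by simp
  then show ?thesis using assms by simp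
next
  case False
  then have "(i+d) mod L = i + d - L" using assms by (simp add: le_mod_geq)
  then show ?thesis using assms False by linarith
qed

lemma cyc_facts:
  assumes "cyc k n N c L E cc"
  shows "L \<ge> 3" "n = L*(k-1)" "\<And>i. i < L \<Longrightarrow> c (E i)" "\<And>i. i < L \<Longrightarrow> card (E i) = k"
    "\<And>i. i < L \<Longrightarrow> cc i \<in> E i" "\<And>i. i < L \<Longrightarrow> cc i \<in> E ((i+1) mod L)"
    "inj_on cc {..<L}" "\<And>i i'. i < L \<Longrightarrow> i' < L \<Longrightarrow> i \<noteq> i' \<Longrightarrow> card (E i \<inter> E i') \<le> 1"
    "card (\<Union>i<L. E i) = n" "(\<Union>i<L. E i) \<subseteq> {..<N}"
  using assms unfolding cyc_def by auto

lemma cyc_two_conn: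
  assumes cy: "cyc k n N c L E cc" and i: "i < L"
  shows "\<exists>w. w \<in> E i \<and> w \<noteq> v \<and> (\<exists>i'<L. i' \<noteq> i \<and> w \<in> E i')"
proof -
  note cf = cyc_facts[OF cy]
  have L: "L \<ge> 3" by (rule cf(1))
  define p where "p = (i + (L-1)) mod L"
  have p: "p < L" unfolding p_def using L by simp
  have pi: "p \<noteq> i" unfolding p_def using cyc_mod_ne[OF i, of "L-1"] L by simp
  have "(p+1) mod L = (i + (L-1) + 1) mod L" unfolding p_def using cyc_mod_next[of L] L by simp
  also have "\<dots> = i" using i L by simp
  finally have pn: "(p+1) mod L = i" .
  have ni: "(i+1) mod L \<noteq> i" using cyc_mod_ne[OF i, of 1] L by simp
  have nl: "(i+1) mod L < L" using L by simp
  have a: "cc i \<in> E i" "cc i \<in> E ((i+1) mod L)" using cf(5,6) i by auto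
  have b: "cc p \<in> E i" "cc p \<in> E p" using cf(5,6)[OF p] pn by auto
  have ab: "cc i \<noteq> cc p"
  proof
    assume "cc i = cc p"
    then have "i = p" using inj_onD[OF cf(7)] i p by auto
    then show False using pi by simp
  qed
  show ?thesis
  proof (cases "cc i = v")
    case True
    then have "cc p \<noteq> v" using ab by simp
    then show ?thesis using b p pi by blast
  next
    case False
    then show ?thesis using a ni nl by blast
  qed
qed

lemma allV_false:
  assumes cy: "cyc k n N c L E cc" and k: "k \<ge> 3" and n: "n \<ge> 2"
    and V: "\<forall>i<L. \<exists>j\<in>{1..C}. E i \<subseteq> Vp m n j"
  shows False
proof -
  note cf = cyc_facts[OF cy]
  have L: "L \<ge> 3" by (rule cf(1))
  obtain j0 where j0: "j0 \<in> {1..C}" "E 0 \<subseteq> Vp m n j0" using V[rule_format, of 0] L by auto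
  have all: "\<forall>d. d < L \<longrightarrow> E d \<subseteq> Vp m n j0"
  proof
    fix d show "d < L \<longrightarrow> E d \<subseteq> Vp m n j0"
    proof (induction d)
      case 0 then show ?case using j0 by simp
    next
      case (Suc d)
      show ?case
      proof
        assume d: "Suc d < L"
        then have IH: "E d \<subseteq> Vp m n j0" using Suc by simp
        obtain j' where j': "j' \<in> {1..C}" "E (Suc d) \<subseteq> Vp m n j'" using V d by blast
        have "cc d \<in> E d" using cf(5) d by simp
        moreover have "cc d \<in> E ((d+1) mod L)" using cf(6)[of d] d by simp
        moreover have "(d+1) mod L = Suc d" using d by simp
        ultimately have "cc d \<in> E d" "cc d \<in> E (Suc d)" by simp_all
        then have "cc d \<in> Vp m n j0" "cc d \<in> Vp m n j'" using IH j' d by auto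
        then have "j' = j0" using Vp_same[OF j'(1) j0(1)] by blast
        then show "E (Suc d) \<subseteq> Vp m n j0" using j' by simp
      qed
    qed
  qed
  then have "(\<Union>i<L. E i) \<subseteq> Vp m n j0" by blast
  then have "card (\<Union>i<L. E i) \<le> card (Vp m n j0)" by (rule card_mono[OF Vp_finite])
  then have "n \<le> n - 1" using cf(9) Vp_card[of j0 m n] j0 by simp
  then show False using n by simp
qed



lemma tau_cycle_false:
  assumes cy: "cyc k n N c L E cc" and k: "k \<ge> 3" and n: "n \<ge> 2"
    and red: "\<forall>e. c e \<longrightarrow> (\<exists>j\<in>{1..C}. e \<subseteq> Vp m n j) \<or> (\<exists>T\<in>F. \<exists>v. v \<notin> {..<m} \<and> e = insert v T)"
    and F: "\<forall>T\<in>F. T \<subseteq> {..<m} \<and> card T = k-1"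
    and Fi: "\<forall>T\<in>F. \<forall>T'\<in>F. T \<noteq> T' \<longrightarrow> card (T \<inter> T') \<noteq> 1"
  shows False
proof (cases "\<forall>i<L. \<exists>j\<in>{1..C}. E i \<subseteq> Vp m n j")
  case True
  then show False using allV_false[OF cy k n] by blast
next
  case False
  note cf = cyc_facts[OF cy]
  obtain i where i: "i < L" "\<not> (\<exists>j\<in>{1..C}. E i \<subseteq> Vp m n j)" using False by blast
  then obtain T v where Tv: "T \<in> F" "v \<notin> {..<m}" "E i = insert v T"
    using red[rule_format, OF cf(3)[OF i(1)]] i(2) by blast
  obtain w i' where w: "w \<in> E i" "w \<noteq> v" "i' < L" "i' \<noteq> i" "w \<in> E i'"
    using cyc_two_conn[OF cy i(1), of v] by blast
  have wT: "w \<in> T" using w Tv by simp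
  have wW: "w \<in> {..<m}" using wT F Tv by blast
  have "c (E i')" using cf(3) w by simp
  then consider (V) j where "j \<in> {1..C}" "E i' \<subseteq> Vp m n j"
    | (W) T' v' where "T' \<in> F" "v' \<notin> {..<m}" "E i' = insert v' T'"
    using red[rule_format, OF \<open>c (E i')\<close>] by blast
  then show False
  proof cases
    case V
    then show False using w(5) wW Vp_W'[of w m n j] by blast
  next
    case W
    have wT': "w \<in> T'" using W w wW by auto
    have "card (E i) > 0" using cf(4)[OF i(1)] k by simp
    then have "finite (E i)" by (rule card_ge_0_finite)
    then have fin: "finite (E i \<inter> E i')" by simp
    have c1: "card (E i \<inter> E i') \<le> 1" using cf(8)[OF i(1) w(3)] w(4) by simp
    have sub: "T \<inter> T' \<subseteq> E i \<inter> E i'" using Tv W by auto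
    show False
    proof (cases "T = T'")
      case True
      then have "T \<subseteq> E i \<inter> E i'" using sub by simp
      then have "card T \<le> card (E i \<inter> E i')" by (rule card_mono[OF fin])
      then have "card T \<le> 1" using c1 by simp
      moreover have "card T = k-1" using F Tv(1) by blast
      ultimately show False using k by simp
    next
      case False
      have "card (T \<inter> T') \<le> 1" using card_mono[OF fin sub] c1 by simp
      moreover have "card (T \<inter> T') \<ge> 1"
      proof -
        have "finite (T \<inter> T')" by (rule finite_subset[OF sub fin])
        moreover have "T \<inter> T' \<noteq> {}" using wT wT' by blast
        ultimately have "card (T \<inter> T') > 0" by (simp add: card_gt_0_iff)
        then show ?thesis by simp
      qed
      ultimately have "card (T \<inter> T') = 1" by simp
      then show False using Fi Tv(1) W(1) False by blast
    qed
  qed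
qed


lemma q_cycle_false:
  assumes cy: "cyc k n N c L E cc" and k: "k \<ge> 3" and n: "n \<ge> 2"
    and red: "\<forall>e. c e \<longrightarrow> (\<exists>j\<in>{1..C}. e \<subseteq> Vp m n j) \<or> (\<exists>j\<in>{1..C}. \<exists>v\<in>Vp m n j. e = insert v (\<sigma> j))"
    and sig: "\<forall>j\<in>{1..C}. \<sigma> j \<subseteq> {..<m} \<and> card (\<sigma> j) = k-1"
    and big: "n > m + L"
  shows False
proof -
  note cf = cyc_facts[OF cy]
  have L: "L \<ge> 3" by (rule cf(1))
  define Vt where "Vt e = (\<exists>j\<in>{1..C}. e \<subseteq> Vp m n j)" for e
  define Wt where "Wt e = (\<exists>j\<in>{1..C}. \<exists>v\<in>Vp m n j. e = insert v (\<sigma> j))" for e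
  have redc: "Vt (E i) \<or> Wt (E i)" if "i < L" for i
    using red[rule_format, OF cf(3)[OF that]] unfolding Vt_def Wt_def by blast
  have noVt: "\<not> Vt e" if "x \<in> e" "x \<in> {..<m}" for x e
  proof
    assume "Vt e"
    then obtain j where "e \<subseteq> Vp m n j" unfolding Vt_def by blast
    then show False using that Vp_W'[of x m n j] by blast
  qed
  have finE: "finite (E i)" if "i < L" for i
  proof -
    have "card (E i) > 0" using cf(4)[OF that] k by simp
    then show ?thesis by (rule card_ge_0_finite)
  qed
  have modn: "((a mod L) + 1) mod L = (a + 1) mod L" for a using cyc_mod_next[of L a] L by simp
  have stepA: "cc i \<noteq> v" if i: "i < L" and j: "j \<in> {1..C}" and v: "v \<in> Vp m n j"
    and Ei: "E i = insert v (\<sigma> j)" for i j v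
  proof
    assume ccv: "cc i = v"
    define p where "p = (i + (L-1)) mod L"
    have p: "p < L" unfolding p_def using L by simp
    have pi: "p \<noteq> i" unfolding p_def using cyc_mod_ne[OF i, of "L-1"] L by simp
    have "(p+1) mod L = (i + (L-1) + 1) mod L" unfolding p_def by (rule modn)
    also have "\<dots> = i" using i L by simp
    finally have pn: "(p+1) mod L = i" .
    have ccp: "cc p \<in> E i" "cc p \<in> E p" using cf(5,6)[OF p] pn by auto
    have "cc p \<noteq> cc i"
    proof
      assume "cc p = cc i"
      then have "p = i" using inj_onD[OF cf(7)] i p by auto
      then show False using pi by simp
    qed
    then have "cc p \<in> \<sigma> j" using ccp(1) Ei ccv by simp
    then have ccpW: "cc p \<in> {..<m}" using sig j by blast
    have nVp: "\<not> Vt (E p)" by (rule noVt[OF ccp(2) ccpW])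
    define D where "D = {d. 0 < d \<and> d < L \<and> \<not> Vt (E ((i+d) mod L))}"
    have "L - 1 \<in> D" unfolding D_def using nVp L p_def by simp
    define d0 where "d0 = (LEAST d. d \<in> D)"
    have d0D: "d0 \<in> D" unfolding d0_def by (rule LeastI) (rule \<open>L - 1 \<in> D\<close>)
    have d0min: "\<And>d. d < d0 \<Longrightarrow> d \<notin> D" unfolding d0_def by (rule not_less_Least)
    have d0: "0 < d0" "d0 < L" "\<not> Vt (E ((i+d0) mod L))" using d0D unfolding D_def by auto
    have claim: "0 < s \<longrightarrow> s < d0 \<longrightarrow> E ((i+s) mod L) \<subseteq> Vp m n j" for s
    proof (induction s)
      case 0 then show ?case by simp
    next
      case (Suc s)
      show ?case
      proof (intro impI)
        assume s: "Suc s < d0"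
        then have "Suc s \<notin> D" by (rule d0min)
        then have "Vt (E ((i + Suc s) mod L))" unfolding D_def using s d0 by auto
        then obtain j' where j': "j' \<in> {1..C}" "E ((i + Suc s) mod L) \<subseteq> Vp m n j'"
          unfolding Vt_def by blast
        define x where "x = (i + s) mod L"
        have x: "x < L" unfolding x_def using L by simp
        have "cc x \<in> E ((x+1) mod L)" using cf(6)[OF x] .
        moreover have "(x+1) mod L = (i + Suc s) mod L" unfolding x_def using modn by simp
        ultimately have c1: "cc x \<in> Vp m n j'" using j' by auto
        have c2: "cc x \<in> Vp m n j"
        proof (cases "s = 0")
          case True
          then have "x = i" unfolding x_def using i by simp
          then show ?thesis using ccv v by simp
        next
          case False
          then have "E x \<subseteq> Vp m n j" using Suc.IH s unfolding x_def by simp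
          then show ?thesis using cf(5)[OF x] by blast
        qed
        have "j' = j" using Vp_same[OF j'(1) j c1 c2] .
        then show "E ((i + Suc s) mod L) \<subseteq> Vp m n j" using j' by simp
      qed
    qed
    obtain j' v' where jv': "j' \<in> {1..C}" "v' \<in> Vp m n j'" "E ((i+d0) mod L) = insert v' (\<sigma> j')"
      using redc[of "(i+d0) mod L"] d0(3) L unfolding Wt_def by auto
    define x where "x = (i + (d0-1)) mod L"
    have x: "x < L" unfolding x_def using L by simp
    have "(x+1) mod L = (i + (d0 - 1) + 1) mod L" unfolding x_def by (rule modn)
    also have "\<dots> = (i+d0) mod L" using d0 by simp
    finally have xn: "(x+1) mod L = (i+d0) mod L" .
    have cx1: "cc x \<in> E ((i+d0) mod L)" using cf(6)[OF x] xn by simp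
    have cx2: "cc x \<in> Vp m n j"
    proof (cases "d0 = 1")
      case True
      then have "x = i" unfolding x_def using i by simp
      then show ?thesis using ccv v by simp
    next
      case False
      then have "E x \<subseteq> Vp m n j" using claim[of "d0-1"] d0 unfolding x_def by simp
      then show ?thesis using cf(5)[OF x] by blast
    qed
    have "cc x \<notin> \<sigma> j'" using cx2 Vp_W'[of "cc x" m n j] sig jv'(1) by blast
    then have "cc x = v'" using cx1 jv'(3) by simp
    then have "j' = j" using Vp_same[OF jv'(1) j] jv'(2) cx2 by simp
    then have sub: "\<sigma> j \<subseteq> E i \<inter> E ((i+d0) mod L)" using Ei jv'(3) by auto
    have ne: "(i+d0) mod L \<noteq> i" using cyc_mod_ne[OF i d0(1,2)] .
    have "card (E i \<inter> E ((i+d0) mod L)) \<le> 1" using cf(8)[OF i _ ne[symmetric]] L by simp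
    moreover have "card (\<sigma> j) \<le> card (E i \<inter> E ((i+d0) mod L))"
      by (rule card_mono[OF _ sub]) (simp add: finE[OF i])
    moreover have "card (\<sigma> j) = k-1" using sig j by blast
    ultimately show False using k by simp
  qed
  have stepB: "Wt (E ((i+1) mod L))" if i: "i < L" and w: "Wt (E i)" for i
  proof -
    obtain j v where jv: "j \<in> {1..C}" "v \<in> Vp m n j" "E i = insert v (\<sigma> j)" using w unfolding Wt_def by blast
    have "cc i \<noteq> v" by (rule stepA[OF i jv])
    then have "cc i \<in> \<sigma> j" using cf(5)[OF i] jv(3) by simp
    then have "cc i \<in> {..<m}" using sig jv(1) by blast
    then have "\<not> Vt (E ((i+1) mod L))" using noVt cf(6)[OF i] by blast
    then show ?thesis using redc[of "(i+1) mod L"] L by simp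
  qed
  have allW: "\<forall>i<L. Wt (E i)"
  proof (cases "\<forall>i<L. Vt (E i)")
    case True
    then show ?thesis using allV_false[OF cy k n, of C m] unfolding Vt_def by blast
  next
    case False
    then obtain i0 where i0: "i0 < L" "\<not> Vt (E i0)" by blast
    then have w0: "Wt (E i0)" using redc by blast
    have alld: "Wt (E ((i0 + d) mod L))" for d
    proof (induction d)
      case 0 then show ?case using w0 i0 by simp
    next
      case (Suc d)
      have "Wt (E ((((i0 + d) mod L) + 1) mod L))" using stepB[OF _ Suc.IH] L by simp
      then show ?case using modn by simp
    qed
    show ?thesis
    proof (intro allI impI)
      fix i assume i: "i < L"
      have "(i0 + (i + L - i0)) mod L = (i + L) mod L" using i0 by simp
      also have "\<dots> = i" using i by simp
      finally show "Wt (E i)" using alld[of "i + L - i0"] by simp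
    qed
  qed
  have "\<forall>i\<in>{..<L}. \<exists>v. E i \<subseteq> insert v {..<m}"
  proof
    fix i assume "i \<in> {..<L}"
    then obtain j v where "j \<in> {1..C}" "E i = insert v (\<sigma> j)" using allW unfolding Wt_def by blast
    then have "E i \<subseteq> insert v {..<m}" using sig by blast
    then show "\<exists>v. E i \<subseteq> insert v {..<m}" by blast
  qed
  then obtain ov where ov: "\<forall>i\<in>{..<L}. E i \<subseteq> insert (ov i) {..<m}" by (rule bchoice[elim_format]) blast
  have "(\<Union>i<L. E i) \<subseteq> {..<m} \<union> ov ` {..<L}" using ov by blast
  then have "card (\<Union>i<L. E i) \<le> card ({..<m} \<union> ov ` {..<L})" by (rule card_mono[rotated]) simp
  also have "\<dots> \<le> card {..<m} + card (ov ` {..<L})" by (rule card_Un_le)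
  also have "\<dots> \<le> m + L" using card_image_le[of "{..<L}" ov] by simp
  finally have "n \<le> m + L" using cf(9) by simp
  then show False using big by simp
qed


lemma HE_mem:
  fixes A :: "nat \<Rightarrow> 'a set"
  assumes k: "k \<ge> 3" and disj: "\<forall>i\<in>{1..\<chi>}. \<forall>j\<in>{1..\<chi>}. i \<noteq> j \<longrightarrow> A i \<inter> A j = {}"
    and fin: "\<forall>i\<in>{1..\<chi>}. finite (A i)"
    and i: "i \<in> {1..\<chi>}" and i': "i' \<in> {1..\<chi>}" "i' \<noteq> i"
    and S: "S \<subseteq> A i" "card S = k - 1" and x: "x \<in> A i'"
  shows "insert x S \<in> {e. e \<subseteq> (\<Union>i\<in>{1..\<chi>}. A i) \<and> card e = k \<and> (\<exists>i\<in>{1..\<chi>}. card (e \<inter> A i) = k - 1)}"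
proof -
  have xn: "x \<notin> A i" using disj i i' x by blast
  then have xS: "x \<notin> S" using S by blast
  have finS: "finite S" using S fin i by (meson finite_subset)
  have c1: "card (insert x S) = k" using xS finS S k by simp
  have "insert x S \<inter> A i = S" using xn S by blast
  then have c2: "card (insert x S \<inter> A i) = k - 1" using S by simp
  have sub: "insert x S \<subseteq> (\<Union>i\<in>{1..\<chi>}. A i)" using S x i i' by blast
  show ?thesis using c1 c2 sub i by blast
qed

lemma blue_bij:
  fixes A :: "nat \<Rightarrow> 'a set" and g :: "'a \<Rightarrow> nat"
  assumes k: "k \<ge> 3" and n: "n \<ge> 2" and chi: "\<chi> \<ge> 2"
    and fin: "\<forall>i\<in>{1..\<chi>}. finite (A i)"
    and disj: "\<forall>i\<in>{1..\<chi>}. \<forall>j\<in>{1..\<chi>}. i \<noteq> j \<longrightarrow> A i \<inter> A j = {}"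
    and size: "\<forall>i\<in>{1..\<chi> - 1}. card (A i) > (\<chi> - 1) * (k - 2) + m"
    and redV: "\<forall>j\<in>{1..\<chi>-1}. \<forall>e. e \<subseteq> Vp m n j \<longrightarrow> c e"
    and ginj: "inj_on g (\<Union>i\<in>{1..\<chi>}. A i)"
    and gran: "g ` (\<Union>i\<in>{1..\<chi>}. A i) \<subseteq> {..< m + (\<chi>-1)*(n-1)}"
    and blue: "\<forall>e\<in>{e. e \<subseteq> (\<Union>i\<in>{1..\<chi>}. A i) \<and> card e = k \<and> (\<exists>i\<in>{1..\<chi>}. card (e \<inter> A i) = k - 1)}.
                 card (g ` e) = k \<and> c (g ` e) = False"
  shows "g ` A \<chi> \<subseteq> {..<m} \<and> (\<forall>j\<in>{1..\<chi>-1}. \<exists>i\<in>{1..\<chi>-1}. \<exists>x\<in>A i. g x \<in> Vp m n j)"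
proof -
  define I where "I = {1..\<chi>-1}"
  have IC: "\<And>i. i \<in> I \<Longrightarrow> i \<in> {1..\<chi>}" unfolding I_def by auto
  have ginjA: "inj_on g (A i)" if "i \<in> {1..\<chi>}" for i
    using inj_on_subset[OF ginj] that by blast
  have P1: "\<exists>j\<in>I. \<exists>S. S \<subseteq> A i \<and> card S = k-1 \<and> g ` S \<subseteq> Vp m n j" if i: "i \<in> I" for i
  proof (rule ccontr)
    assume neg: "\<not> ?thesis"
    define B where "B j = {x\<in>A i. g x \<in> Vp m n j}" for j
    have finA: "finite (A i)" using fin IC[OF i] by blast
    have Bsmall: "card (B j) \<le> k - 2" if j: "j \<in> I" for j
    proof (rule ccontr)
      assume "\<not> card (B j) \<le> k - 2"
      then have "k - 1 \<le> card (B j)" by simp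
      then obtain S where S: "S \<subseteq> B j" "card S = k - 1" by (meson obtain_subset_with_card_n)
      then have "S \<subseteq> A i" "g ` S \<subseteq> Vp m n j" unfolding B_def by auto
      then show False using neg j S(2) by blast
    qed
    define B0 where "B0 = {x\<in>A i. g x < m}"
    have cover: "A i \<subseteq> B0 \<union> (\<Union>j\<in>I. B j)"
    proof
      fix x assume x: "x \<in> A i"
      then have "g x < m + (\<chi>-1)*(n-1)" using gran IC[OF i] by blast
      then have "g x < m \<or> (\<exists>j\<in>{1..\<chi>-1}. g x \<in> Vp m n j)" using Vp_cover[OF n] by blast
      then show "x \<in> B0 \<union> (\<Union>j\<in>I. B j)" using x unfolding B0_def B_def I_def by blast
    qed
    have "card B0 = card (g ` B0)" using ginjA[OF IC[OF i]] unfolding B0_def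
      by (intro card_image[symmetric]) (rule inj_on_subset, auto)
    also have "\<dots> \<le> card {..<m}" by (rule card_mono) (auto simp: B0_def)
    finally have cB0: "card B0 \<le> m" by simp
    have "card (\<Union>j\<in>I. B j) \<le> (\<Sum>j\<in>I. card (B j))" by (rule card_UN_le) (simp add: I_def)
    also have "\<dots> \<le> (\<Sum>j\<in>I. (k-2))" by (rule sum_mono) (rule Bsmall)
    also have "\<dots> = (\<chi>-1)*(k-2)" unfolding I_def by simp
    finally have cU: "card (\<Union>j\<in>I. B j) \<le> (\<chi>-1)*(k-2)" .
    have "card (A i) \<le> card (B0 \<union> (\<Union>j\<in>I. B j))"
    proof (rule card_mono[OF _ cover])
      have "B0 \<union> (\<Union>j\<in>I. B j) \<subseteq> A i" unfolding B0_def B_def by blast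
      then show "finite (B0 \<union> (\<Union>j\<in>I. B j))" using finA by (rule finite_subset)
    qed
    also have "\<dots> \<le> card B0 + card (\<Union>j\<in>I. B j)" by (rule card_Un_le)
    finally have "card (A i) \<le> m + (\<chi>-1)*(k-2)" using cB0 cU by simp
    then show False using size i unfolding I_def by fastforce
  qed
  have P2: "g x \<notin> Vp m n j" if i: "i \<in> I" and S: "S \<subseteq> A i" "card S = k-1" "g ` S \<subseteq> Vp m n j"
    and j: "j \<in> I" and i': "i' \<in> {1..\<chi>}" "i' \<noteq> i" and x: "x \<in> A i'" for i j S i' x
  proof
    assume gx: "g x \<in> Vp m n j"
    have e: "insert x S \<in> {e. e \<subseteq> (\<Union>i\<in>{1..\<chi>}. A i) \<and> card e = k \<and> (\<exists>i\<in>{1..\<chi>}. card (e \<inter> A i) = k - 1)}"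
      by (rule HE_mem[OF k disj fin IC[OF i] i' S(1,2) x])
    have "g ` insert x S \<subseteq> Vp m n j" using gx S(3) by simp
    then have "c (g ` insert x S)" using redV j unfolding I_def by blast
    then show False using blue e by blast
  qed
  have "\<forall>i\<in>I. \<exists>p. fst p \<in> I \<and> snd p \<subseteq> A i \<and> card (snd p) = k-1 \<and> g ` snd p \<subseteq> Vp m n (fst p)"
  proof
    fix i assume "i \<in> I"
    from P1[OF this] obtain j S' where "j \<in> I" "S' \<subseteq> A i" "card S' = k-1" "g ` S' \<subseteq> Vp m n j" by blast
    then show "\<exists>p. fst p \<in> I \<and> snd p \<subseteq> A i \<and> card (snd p) = k-1 \<and> g ` snd p \<subseteq> Vp m n (fst p)"
      by (intro exI[of _ "(j, S')"]) simp
  qed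
  then obtain h where h: "\<forall>i\<in>I. fst (h i) \<in> I \<and> snd (h i) \<subseteq> A i \<and> card (snd (h i)) = k-1 \<and> g ` snd (h i) \<subseteq> Vp m n (fst (h i))"
    by (rule bchoice[elim_format]) blast
  define J where "J i = fst (h i)" for i
  define S where "S i = snd (h i)" for i
  have JS: "J i \<in> I" "S i \<subseteq> A i" "card (S i) = k-1" "g ` S i \<subseteq> Vp m n (J i)" if "i \<in> I" for i
    using h that unfolding J_def S_def by blast+
  have Sne: "\<exists>x. x \<in> S i" if "i \<in> I" for i
  proof -
    have "card (S i) > 0" using JS(3)[OF that] k by simp
    then have "S i \<noteq> {}" by auto
    then show ?thesis by blast
  qed
  have Jinj: "inj_on J I"
  proof (rule inj_onI)
    fix a b assume a: "a \<in> I" and b: "b \<in> I" and e: "J a = J b"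
    show "a = b"
    proof (rule ccontr)
      assume ab: "a \<noteq> b"
      obtain x where x: "x \<in> S b" using Sne[OF b] by blast
      have "g x \<in> Vp m n (J a)" using JS(4)[OF b] x e by auto
      moreover have "g x \<notin> Vp m n (J a)"
        by (rule P2[OF a JS(2,3,4)[OF a] JS(1)[OF a] IC[OF b] ab[symmetric]]) (use JS(2)[OF b] x in blast)
      ultimately show False by simp
    qed
  qed
  have Jsurj: "J ` I = I"
  proof (rule card_subset_eq)
    show "finite I" by (simp add: I_def)
    show "J ` I \<subseteq> I" using JS(1) by blast
    show "card (J ` I) = card I" using Jinj by (rule card_image)
  qed
  have part1: "g ` A \<chi> \<subseteq> {..<m}"
  proof
    fix y assume "y \<in> g ` A \<chi>"
    then obtain x where x: "x \<in> A \<chi>" "y = g x" by blast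
    have chiC: "\<chi> \<in> {1..\<chi>}" using chi by simp
    have "g x < m + (\<chi>-1)*(n-1)" using gran x chiC by blast
    then have "g x < m \<or> (\<exists>j\<in>{1..\<chi>-1}. g x \<in> Vp m n j)" using Vp_cover[OF n] by blast
    moreover have "\<not> (\<exists>j\<in>{1..\<chi>-1}. g x \<in> Vp m n j)"
    proof
      assume "\<exists>j\<in>{1..\<chi>-1}. g x \<in> Vp m n j"
      then obtain j where j: "j \<in> I" "g x \<in> Vp m n j" unfolding I_def by blast
      then obtain i where i: "i \<in> I" "j = J i" using Jsurj by blast
      have "\<chi> \<noteq> i" using i(1) unfolding I_def by auto
      then have "g x \<notin> Vp m n (J i)"
        by (intro P2[OF i(1) JS(2,3,4)[OF i(1)] JS(1)[OF i(1)] chiC _ x(1)])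
      then show False using j i by simp
    qed
    ultimately show "y \<in> {..<m}" using x by simp
  qed
  have part2: "\<forall>j\<in>{1..\<chi>-1}. \<exists>i\<in>{1..\<chi>-1}. \<exists>x\<in>A i. g x \<in> Vp m n j"
  proof
    fix j assume "j \<in> {1..\<chi>-1}"
    then obtain i where i: "i \<in> I" "j = J i" using Jsurj unfolding I_def by blast
    obtain x where x: "x \<in> S i" using Sne[OF i(1)] by blast
    have "x \<in> A i" "g x \<in> Vp m n j" using JS(2,4)[OF i(1)] x i(2) by auto
    then show "\<exists>i\<in>{1..\<chi>-1}. \<exists>x\<in>A i. g x \<in> Vp m n j" using i(1) unfolding I_def by blast
  qed
  show ?thesis using part1 part2 by blast
qed


definition tauP :: "nat \<Rightarrow> nat \<Rightarrow> nat \<Rightarrow> bool" where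
  "tauP j \<alpha> N \<longleftrightarrow> (\<exists>E. E \<subseteq> {e. e \<subseteq> {..<N} \<and> card e = j} \<and>
        independence_number {..<N} E < \<alpha> \<and>
        (\<forall>e\<in>E. \<forall>e'\<in>E. e \<noteq> e' \<longrightarrow> card (e \<inter> e') \<noteq> 1))"

lemma tau_eq: "tau j \<alpha> = Greatest (tauP j \<alpha>)"
  unfolding tau_def tauP_def by simp

lemma indep_set_fin: "finite {card I | I. I \<subseteq> {..<(N::nat)} \<and> independent_set E I}"
proof -
  have "{card I | I. I \<subseteq> {..<N} \<and> independent_set E I} \<subseteq> {..N}"
  proof
    fix x assume "x \<in> {card I | I. I \<subseteq> {..<N} \<and> independent_set E I}"
    then obtain I where "x = card I" "I \<subseteq> {..<N}" by blast
    then have "x \<le> card {..<N}" using card_mono[of "{..<N}" I] by simp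
    then show "x \<in> {..N}" by simp
  qed
  then show ?thesis by (rule finite_subset) simp
qed

lemma indep_hit:
  fixes N :: nat
  assumes "independence_number {..<N} E < \<alpha>" and "X \<subseteq> {..<N}" and "card X = \<alpha>"
  shows "\<exists>e\<in>E. e \<subseteq> X"
proof (rule ccontr)
  assume "\<not> ?thesis"
  then have "independent_set E X" unfolding independent_set_def by blast
  then have "\<alpha> \<in> {card I | I. I \<subseteq> {..<N} \<and> independent_set E I}" using assms by blast
  then have "\<alpha> \<le> independence_number {..<N} E" unfolding independence_number_def
    using indep_set_fin by (rule Max_ge[rotated])
  then show False using assms by simp
qed

lemma tauP_0: "\<alpha> \<ge> 1 \<Longrightarrow> tauP j \<alpha> 0"
proof -
  assume a: "\<alpha> \<ge> 1"
  have "{card I | I. I \<subseteq> {..<0::nat} \<and> independent_set ({}::nat set set) I} = {0}"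
    by (auto simp: independent_set_def)
  then have "independence_number {..<0::nat} ({}::nat set set) = 0" unfolding independence_number_def by simp
  then show ?thesis unfolding tauP_def using a by (intro exI[of _ "{}"]) simp
qed

lemma tauP_down:
  assumes P: "tauP j \<alpha> N'" and le: "N \<le> N'" and j: "j \<ge> 1"
  shows "tauP j \<alpha> N"
proof -
  obtain E where E: "E \<subseteq> {e. e \<subseteq> {..<N'} \<and> card e = j}" "independence_number {..<N'} E < \<alpha>"
    "\<forall>e\<in>E. \<forall>e'\<in>E. e \<noteq> e' \<longrightarrow> card (e \<inter> e') \<noteq> 1"
    using P unfolding tauP_def by blast
  define E' where "E' = {e\<in>E. e \<subseteq> {..<N}}"
  define S1 where "S1 = {card I | I. I \<subseteq> {..<N} \<and> independent_set E' I}"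
  define S2 where "S2 = {card I | I. I \<subseteq> {..<N'} \<and> independent_set E I}"
  have sub: "S1 \<subseteq> S2"
  proof
    fix x assume "x \<in> S1"
    then obtain I where I: "x = card I" "I \<subseteq> {..<N}" "independent_set E' I" unfolding S1_def by blast
    have "I \<subseteq> {..<N'}" using I(2) le by auto
    moreover have "independent_set E I"
      unfolding independent_set_def
    proof
      fix e assume e: "e \<in> E"
      show "\<not> e \<subseteq> I"
      proof
        assume "e \<subseteq> I"
        then have "e \<in> E'" unfolding E'_def using e I(2) by blast
        then show False using I(3) \<open>e \<subseteq> I\<close> unfolding independent_set_def by blast
      qed
    qed
    ultimately show "x \<in> S2" unfolding S2_def using I(1) by blast
  qed
  have ne: "S1 \<noteq> {}"
  proof -
    have "independent_set E' {}"
      unfolding independent_set_def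
    proof
      fix e assume "e \<in> E'"
      then have "card e = j" using E(1) unfolding E'_def by blast
      then have "e \<noteq> {}" using j by auto
      then show "\<not> e \<subseteq> {}" by blast
    qed
    then have "0 \<in> S1" unfolding S1_def by (intro CollectI exI[of _ "{}"]) simp
    then show ?thesis by blast
  qed
  have "Max S1 \<le> Max S2" using Max_mono[OF sub ne] indep_set_fin unfolding S2_def by blast
  then have "independence_number {..<N} E' < \<alpha>" using E(2) unfolding independence_number_def S1_def S2_def by simp
  moreover have "E' \<subseteq> {e. e \<subseteq> {..<N} \<and> card e = j}" using E(1) unfolding E'_def by blast
  moreover have "\<forall>e\<in>E'. \<forall>e'\<in>E'. e \<noteq> e' \<longrightarrow> card (e \<inter> e') \<noteq> 1" using E(3) unfolding E'_def by blast
  ultimately show ?thesis unfolding tauP_def by blast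
qed

lemma tau_witness:
  assumes j: "j \<ge> 1" and a: "\<alpha> \<ge> 1"
  shows "tauP j \<alpha> (tau j \<alpha>)"
proof (cases "\<exists>B. \<forall>N. tauP j \<alpha> N \<longrightarrow> N \<le> B")
  case True
  then obtain B where B: "\<And>N. tauP j \<alpha> N \<Longrightarrow> N \<le> B" by blast
  show ?thesis unfolding tau_eq by (rule GreatestI_nat[of "tauP j \<alpha>" 0 B, OF tauP_0[OF a] B])
next
  case False
  then have "\<not> (\<forall>N. tauP j \<alpha> N \<longrightarrow> N \<le> tau j \<alpha>)" by blast
  then obtain N where N: "tauP j \<alpha> N" "\<not> N \<le> tau j \<alpha>" by blast
  show ?thesis by (rule tauP_down[OF N(1) _ j]) (use N(2) in simp)
qed

lemma copy_mono:
  assumes "copy_in k N c col X" "N \<le> M" shows "copy_in k M c col X"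
proof -
  have sub: "{..<N} \<subseteq> {..<M}" using assms(2) by auto
  from assms(1) obtain f where f: "inj_on f (fst X)" "f ` fst X \<subseteq> {..<N}" "\<forall>e\<in>snd X. card (f ` e) = k \<and> c (f ` e) = col"
    unfolding copy_in_def by blast
  have "f ` fst X \<subseteq> {..<M}" using f(2) sub by (rule subset_trans)
  then show ?thesis unfolding copy_in_def using f(1,3) by blast
qed

lemma ramsey_mono:
  assumes "ramsey_arrows k N G H" "N \<le> M" shows "ramsey_arrows k M G H"
  unfolding ramsey_arrows_def
proof
  fix c
  have "copy_in k N c True G \<or> copy_in k N c False H" using assms(1) unfolding ramsey_arrows_def by blast
  then show "copy_in k M c True G \<or> copy_in k M c False H"
  proof
    assume "copy_in k N c True G"
    then show ?thesis using copy_mono[OF _ assms(2)] by blast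
  next
    assume "copy_in k N c False H"
    then show ?thesis using copy_mono[OF _ assms(2)] by blast
  qed
qed

lemma copy_from_hom:
  assumes fin: "finite (fst G)" and edges: "\<forall>e\<in>snd G. e \<subseteq> fst G \<and> card e = k"
    and H': "H' \<subseteq> {..<N}" "finite H'" "card H' = card (fst G)"
    and hom: "\<forall>e. e \<subseteq> H' \<and> card e = k \<longrightarrow> c e = col"
  shows "copy_in k N c col G"
proof -
  obtain h where h: "bij_betw h (fst G) H'" using finite_same_card_bij[OF fin H'(2) H'(3)[symmetric]] by blast
  have hi: "inj_on h (fst G)" and himg: "h ` fst G = H'" using h unfolding bij_betw_def by auto
  show ?thesis unfolding copy_in_def
  proof (intro exI[of _ h] conjI ballI)
    show "inj_on h (fst G)" by (rule hi)
    show "h ` fst G \<subseteq> {..<N}" using himg H'(1) by simp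
    fix e assume e: "e \<in> snd G"
    have "card (h ` e) = card e" using inj_on_subset[OF hi] edges e by (intro card_image) blast
    then show ck: "card (h ` e) = k" using edges e by simp
    have "h ` e \<subseteq> H'" using himg edges e by blast
    then show "c (h ` e) = col" using hom ck by blast
  qed
qed

lemma ramsey_exists:
  assumes finG: "finite (fst G)" and eG: "\<forall>e\<in>snd G. e \<subseteq> fst G \<and> card e = k"
    and finH: "finite (fst H)" and eH: "\<forall>e\<in>snd H. e \<subseteq> fst H \<and> card e = k"
  shows "\<exists>N. ramsey_arrows k N G H"
proof -
  obtain N :: nat where N: "partn_lst {..<N} [card (fst G), card (fst H)] k" using ramsey_full[of "[card (fst G), card (fst H)]" k] by blast
  have "ramsey_arrows k N G H" unfolding ramsey_arrows_def
  proof
    fix c :: "nat set \<Rightarrow> bool"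
    define f where "f e = (if c e then 0 else 1::nat)" for e
    have fm: "f \<in> nsets {..<N} k \<rightarrow> {..<2}" unfolding f_def Pi_def by simp
    obtain i H' where iH: "i < length [card (fst G), card (fst H)]" "H' \<in> nsets {..<N} ([card (fst G), card (fst H)] ! i)"
      "f ` (nsets H' k) \<subseteq> {i}"
      using partn_lstE[OF N fm] by auto
    have Hs: "H' \<subseteq> {..<N}" "finite H'" using iH(2) unfolding nsets_def by auto
    have hom: "\<forall>e. e \<subseteq> H' \<and> card e = k \<longrightarrow> f e = i"
    proof (intro allI impI)
      fix e assume e: "e \<subseteq> H' \<and> card e = k"
      then have "e \<in> nsets H' k" unfolding nsets_def using Hs(2) finite_subset by blast
      then show "f e = i" using iH(3) by blast
    qed
    show "copy_in k N c True G \<or> copy_in k N c False H"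
    proof (cases "i = 0")
      case True
      have "card H' = card (fst G)" using iH(2) True unfolding nsets_def by simp
      moreover have "\<forall>e. e \<subseteq> H' \<and> card e = k \<longrightarrow> c e = True"
      proof (intro allI impI)
        fix e assume "e \<subseteq> H' \<and> card e = k"
        then have "f e = 0" using hom True by simp
        then show "c e = True" unfolding f_def by (cases "c e") simp_all
      qed
      ultimately have "copy_in k N c True G" using copy_from_hom[OF finG eG Hs] by blast
      then show ?thesis by blast
    next
      case False
      then have i1: "i = 1" using iH(1) by simp
      have "card H' = card (fst H)" using iH(2) i1 unfolding nsets_def by simp
      moreover have "\<forall>e. e \<subseteq> H' \<and> card e = k \<longrightarrow> c e = False"
      proof (intro allI impI)
        fix e assume "e \<subseteq> H' \<and> card e = k"
        then have "f e = 1" using hom i1 by simp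
        then show "c e = False" unfolding f_def by (cases "c e") simp_all
      qed
      ultimately have "copy_in k N c False H" using copy_from_hom[OF finH eH Hs] by blast
      then show ?thesis by blast
    qed
  qed
  then show ?thesis by blast
qed




lemma surj_exists:
  assumes "finite B" "B \<noteq> {}" "card B \<le> C"
  shows "\<exists>\<sigma>. (\<forall>j\<in>{1..C}. \<sigma> j \<in> B) \<and> (\<forall>T\<in>B. \<exists>j\<in>{1..C}. \<sigma> j = T)"
proof -
  obtain h where h: "bij_betw h {0..<card B} B" using ex_bij_betw_nat_finite[OF assms(1)] by blast
  have cB: "card B > 0" using assms(1,2) by (simp add: card_gt_0_iff)
  define \<sigma> where "\<sigma> j = (if j - 1 < card B then h (j-1) else h 0)" for j
  have "\<forall>j\<in>{1..C}. \<sigma> j \<in> B"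
  proof
    fix j assume "j \<in> {1..C}"
    show "\<sigma> j \<in> B"
    proof (cases "j - 1 < card B")
      case True then show ?thesis using bij_betwE[OF h] unfolding \<sigma>_def by simp
    next
      case False then show ?thesis using bij_betwE[OF h] cB unfolding \<sigma>_def by simp
    qed
  qed
  moreover have "\<forall>T\<in>B. \<exists>j\<in>{1..C}. \<sigma> j = T"
  proof
    fix T assume "T \<in> B"
    then obtain a where a: "a \<in> {0..<card B}" "T = h a" using h unfolding bij_betw_def by blast
    have "a + 1 \<in> {1..C}" using a assms(3) by simp
    moreover have "\<sigma> (a+1) = T" using a unfolding \<sigma>_def by simp
    ultimately show "\<exists>j\<in>{1..C}. \<sigma> j = T" by blast
  qed
  ultimately show ?thesis by blast
qed

lemma blue_unfold:
  assumes "copy_in k N c False (V, HE)"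
  obtains g where "inj_on g V" "g ` V \<subseteq> {..<N}" "\<forall>e\<in>HE. card (g ` e) = k \<and> c (g ` e) = False"
  using assms unfolding copy_in_def by auto

lemma case_tau:
  fixes A :: "nat \<Rightarrow> 'a set"
  assumes k: "k \<ge> 3" and t: "t \<ge> k - 1" and chi: "\<chi> \<ge> 2"
    and n3: "n \<ge> 3 * (k - 1)" and nm: "n mod (k - 1) = 0"
    and fin: "\<forall>i\<in>{1..\<chi>}. finite (A i)"
    and disj: "\<forall>i\<in>{1..\<chi>}. \<forall>j\<in>{1..\<chi>}. i \<noteq> j \<longrightarrow> A i \<inter> A j = {}"
    and size: "\<forall>i\<in>{1..\<chi> - 1}. card (A i) > (\<chi> - 1) * (k - 2) + m"
    and cardt: "card (A \<chi>) = t"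
    and m: "m = tau (k - 1) t"
  shows "\<exists>c. \<not> copy_in k (m + (\<chi>-1)*(n-1)) c True (loose_cycle k n) \<and>
    \<not> copy_in k (m + (\<chi>-1)*(n-1)) c False (\<Union>i\<in>{1..\<chi>}. A i,
            {e. e \<subseteq> (\<Union>i\<in>{1..\<chi>}. A i) \<and> card e = k \<and> (\<exists>i\<in>{1..\<chi>}. card (e \<inter> A i) = k - 1)})"
proof -
  have n: "n \<ge> 2" using n3 k by simp
  obtain F where F: "F \<subseteq> {e. e \<subseteq> {..<m} \<and> card e = k-1}" "independence_number {..<m} F < t"
      "\<forall>e\<in>F. \<forall>e'\<in>F. e \<noteq> e' \<longrightarrow> card (e \<inter> e') \<noteq> 1"
  proof -
    have "tauP (k-1) t (tau (k-1) t)" by (rule tau_witness) (use k t in auto)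
    then show ?thesis using that unfolding m tauP_def by blast
  qed
  define c where "c e = ((\<exists>j\<in>{1..\<chi>-1}. e \<subseteq> Vp m n j) \<or> (\<exists>T\<in>F. \<exists>v. v \<notin> {..<m} \<and> e = insert v T))" for e
  have red: "\<not> copy_in k (m + (\<chi>-1)*(n-1)) c True (loose_cycle k n)"
  proof
    assume "copy_in k (m + (\<chi>-1)*(n-1)) c True (loose_cycle k n)"
    then obtain L E cc where cy: "cyc k n (m + (\<chi>-1)*(n-1)) c L E cc"
      using red_cycle_struct[OF _ k nm n3] by blast
    have r: "\<forall>e. c e \<longrightarrow> (\<exists>j\<in>{1..\<chi>-1}. e \<subseteq> Vp m n j) \<or> (\<exists>T\<in>F. \<exists>v. v \<notin> {..<m} \<and> e = insert v T)"
      unfolding c_def by blast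
    have FF: "\<forall>T\<in>F. T \<subseteq> {..<m} \<and> card T = k-1" using F(1) by blast
    show False by (rule tau_cycle_false[OF cy k n r FF F(3)])
  qed
  have blue: "\<not> copy_in k (m + (\<chi>-1)*(n-1)) c False (\<Union>i\<in>{1..\<chi>}. A i,
            {e. e \<subseteq> (\<Union>i\<in>{1..\<chi>}. A i) \<and> card e = k \<and> (\<exists>i\<in>{1..\<chi>}. card (e \<inter> A i) = k - 1)})"
  proof
    assume "copy_in k (m + (\<chi>-1)*(n-1)) c False (\<Union>i\<in>{1..\<chi>}. A i,
            {e. e \<subseteq> (\<Union>i\<in>{1..\<chi>}. A i) \<and> card e = k \<and> (\<exists>i\<in>{1..\<chi>}. card (e \<inter> A i) = k - 1)})"
    then obtain g where g: "inj_on g (\<Union>i\<in>{1..\<chi>}. A i)" "g ` (\<Union>i\<in>{1..\<chi>}. A i) \<subseteq> {..<m + (\<chi>-1)*(n-1)}"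
      "\<forall>e\<in>{e. e \<subseteq> (\<Union>i\<in>{1..\<chi>}. A i) \<and> card e = k \<and> (\<exists>i\<in>{1..\<chi>}. card (e \<inter> A i) = k - 1)}.
         card (g ` e) = k \<and> c (g ` e) = False"
      by (rule blue_unfold)
    have redV: "\<forall>j\<in>{1..\<chi>-1}. \<forall>e. e \<subseteq> Vp m n j \<longrightarrow> c e" unfolding c_def by blast
    have bb: "g ` A \<chi> \<subseteq> {..<m} \<and> (\<forall>j\<in>{1..\<chi>-1}. \<exists>i\<in>{1..\<chi>-1}. \<exists>x\<in>A i. g x \<in> Vp m n j)"
      by (rule blue_bij[OF k n chi fin disj size redV g])
    have chiC: "\<chi> \<in> {1..\<chi>}" using chi by simp
    have gA: "inj_on g (A \<chi>)" using inj_on_subset[OF g(1)] chiC by blast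
    have cX: "card (g ` A \<chi>) = t" using card_image[OF gA] cardt by simp
    obtain T where T: "T \<in> F" "T \<subseteq> g ` A \<chi>" using indep_hit[OF F(2) _ cX] bb by blast
    define T0 where "T0 = {x \<in> A \<chi>. g x \<in> T}"
    have gT0: "g ` T0 = T" using T(2) unfolding T0_def by blast
    have T0A: "T0 \<subseteq> A \<chi>" unfolding T0_def by blast
    have "card T0 = card T" using card_image[OF inj_on_subset[OF gA T0A]] gT0 by simp
    then have cT0: "card T0 = k - 1" using F(1) T(1) by auto
    have "1 \<in> {1..\<chi>-1}" using chi by simp
    then obtain i x where ix: "i \<in> {1..\<chi>-1}" "x \<in> A i" "g x \<in> Vp m n 1" using bb by blast
    have iC: "i \<in> {1..\<chi>}" "i \<noteq> \<chi>" using ix(1) by auto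
    have e: "insert x T0 \<in> {e. e \<subseteq> (\<Union>i\<in>{1..\<chi>}. A i) \<and> card e = k \<and> (\<exists>i\<in>{1..\<chi>}. card (e \<inter> A i) = k - 1)}"
      by (rule HE_mem[OF k disj fin chiC iC T0A cT0 ix(2)])
    have "g ` insert x T0 = insert (g x) T" using gT0 by simp
    moreover have "g x \<notin> {..<m}" using Vp_W'[OF ix(3)] .
    ultimately have "c (g ` insert x T0)" unfolding c_def using T(1) by blast
    then show False using g(3) e by blast
  qed
  show ?thesis using red blue by blast
qed

lemma case_q1:
  fixes A :: "nat \<Rightarrow> 'a set"
  assumes k: "k \<ge> 3" and t: "t \<ge> k - 1" and chi: "\<chi> \<ge> 2" and q: "q \<ge> k - 1"
    and chiq: "\<chi> > q choose (k - 1)"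
    and n3: "n \<ge> 3 * (k - 1)" and nm: "n mod (k - 1) = 0"
    and fin: "\<forall>i\<in>{1..\<chi>}. finite (A i)"
    and disj: "\<forall>i\<in>{1..\<chi>}. \<forall>j\<in>{1..\<chi>}. i \<noteq> j \<longrightarrow> A i \<inter> A j = {}"
    and size: "\<forall>i\<in>{1..\<chi> - 1}. card (A i) > (\<chi> - 1) * (k - 2) + q"
    and cardt: "card (A \<chi>) = t"
    and big: "n > q + n div (k-1)"
  shows "\<exists>c. \<not> copy_in k (q + (\<chi>-1)*(n-1)) c True (loose_cycle k n) \<and>
    \<not> copy_in k (q + (\<chi>-1)*(n-1)) c False (\<Union>i\<in>{1..\<chi>}. A i,
            {e. e \<subseteq> (\<Union>i\<in>{1..\<chi>}. A i) \<and> card e = k \<and> (\<exists>i\<in>{1..\<chi>}. card (e \<inter> A i) = k - 1)})"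
proof -
  have n: "n \<ge> 2" using n3 k by simp
  have "nsets {..<q} (k-1) \<noteq> {}" using q by (simp add: nsets_eq_empty_iff)
  moreover have "card (nsets {..<q} (k-1)) \<le> \<chi> - 1" using chiq by simp
  ultimately obtain \<sigma> where \<sigma>: "\<forall>j\<in>{1..\<chi>-1}. \<sigma> j \<in> nsets {..<q} (k-1)"
    "\<forall>T\<in>nsets {..<q} (k-1). \<exists>j\<in>{1..\<chi>-1}. \<sigma> j = T"
    using surj_exists[of "nsets {..<q} (k-1)" "\<chi>-1"] finite_imp_finite_nsets[of "{..<q}"] by blast
  define c where "c e = ((\<exists>j\<in>{1..\<chi>-1}. e \<subseteq> Vp q n j) \<or> (\<exists>j\<in>{1..\<chi>-1}. \<exists>v\<in>Vp q n j. e = insert v (\<sigma> j)))" for e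
  have red: "\<not> copy_in k (q + (\<chi>-1)*(n-1)) c True (loose_cycle k n)"
  proof
    assume "copy_in k (q + (\<chi>-1)*(n-1)) c True (loose_cycle k n)"
    then obtain L E cc where cy: "cyc k n (q + (\<chi>-1)*(n-1)) c L E cc"
      using red_cycle_struct[OF _ k nm n3] by blast
    have r: "\<forall>e. c e \<longrightarrow> (\<exists>j\<in>{1..\<chi>-1}. e \<subseteq> Vp q n j) \<or> (\<exists>j\<in>{1..\<chi>-1}. \<exists>v\<in>Vp q n j. e = insert v (\<sigma> j))"
      unfolding c_def by blast
    have sg: "\<forall>j\<in>{1..\<chi>-1}. \<sigma> j \<subseteq> {..<q} \<and> card (\<sigma> j) = k-1" using \<sigma>(1) unfolding nsets_def by blast
    have nL: "n = L*(k-1)" using cyc_facts(2)[OF cy] .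
    have "L = n div (k-1)" using nL k by simp
    then have bg: "n > q + L" using big by simp
    show False by (rule q_cycle_false[OF cy k n r sg bg])
  qed
  have blue: "\<not> copy_in k (q + (\<chi>-1)*(n-1)) c False (\<Union>i\<in>{1..\<chi>}. A i,
            {e. e \<subseteq> (\<Union>i\<in>{1..\<chi>}. A i) \<and> card e = k \<and> (\<exists>i\<in>{1..\<chi>}. card (e \<inter> A i) = k - 1)})"
  proof
    assume "copy_in k (q + (\<chi>-1)*(n-1)) c False (\<Union>i\<in>{1..\<chi>}. A i,
            {e. e \<subseteq> (\<Union>i\<in>{1..\<chi>}. A i) \<and> card e = k \<and> (\<exists>i\<in>{1..\<chi>}. card (e \<inter> A i) = k - 1)})"
    then obtain g where g: "inj_on g (\<Union>i\<in>{1..\<chi>}. A i)" "g ` (\<Union>i\<in>{1..\<chi>}. A i) \<subseteq> {..<q + (\<chi>-1)*(n-1)}"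
      "\<forall>e\<in>{e. e \<subseteq> (\<Union>i\<in>{1..\<chi>}. A i) \<and> card e = k \<and> (\<exists>i\<in>{1..\<chi>}. card (e \<inter> A i) = k - 1)}.
         card (g ` e) = k \<and> c (g ` e) = False"
      by (rule blue_unfold)
    have redV: "\<forall>j\<in>{1..\<chi>-1}. \<forall>e. e \<subseteq> Vp q n j \<longrightarrow> c e" unfolding c_def by blast
    have bb: "g ` A \<chi> \<subseteq> {..<q} \<and> (\<forall>j\<in>{1..\<chi>-1}. \<exists>i\<in>{1..\<chi>-1}. \<exists>x\<in>A i. g x \<in> Vp q n j)"
      by (rule blue_bij[OF k n chi fin disj size redV g])
    have chiC: "\<chi> \<in> {1..\<chi>}" using chi by simp
    have gA: "inj_on g (A \<chi>)" using inj_on_subset[OF g(1)] chiC by blast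
    have "k - 1 \<le> card (A \<chi>)" using cardt t by simp
    then obtain T0 where T0: "T0 \<subseteq> A \<chi>" "card T0 = k - 1" by (meson obtain_subset_with_card_n)
    have cg: "card (g ` T0) = k - 1" using card_image[OF inj_on_subset[OF gA T0(1)]] T0(2) by simp
    have fT0: "finite T0" using T0 fin chiC by (meson finite_subset)
    have "g ` T0 \<in> nsets {..<q} (k-1)" unfolding nsets_def using cg fT0 T0(1) bb by blast
    then obtain j where j: "j \<in> {1..\<chi>-1}" "\<sigma> j = g ` T0" using \<sigma>(2) by blast
    then obtain i x where ix: "i \<in> {1..\<chi>-1}" "x \<in> A i" "g x \<in> Vp q n j" using bb by blast
    have iC: "i \<in> {1..\<chi>}" "i \<noteq> \<chi>" using ix(1) by auto
    have e: "insert x T0 \<in> {e. e \<subseteq> (\<Union>i\<in>{1..\<chi>}. A i) \<and> card e = k \<and> (\<exists>i\<in>{1..\<chi>}. card (e \<inter> A i) = k - 1)}"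
      by (rule HE_mem[OF k disj fin chiC iC T0 ix(2)])
    have "g ` insert x T0 = insert (g x) (\<sigma> j)" using j by simp
    then have "c (g ` insert x T0)" unfolding c_def using j(1) ix(3) by blast
    then show False using g(3) e by blast
  qed
  show ?thesis using red blue by blast
qed

lemma case_q2:
  fixes A :: "nat \<Rightarrow> 'a set"
  assumes k: "k \<ge> 3" and t: "t \<ge> k - 1" and chi: "\<chi> \<ge> 2" and q: "q \<ge> k - 1"
    and chiq: "\<chi> > q choose (k - 1)"
    and n3: "n \<ge> 3 * (k - 1)" and nm: "n mod (k - 1) = 0"
    and fin: "\<forall>i\<in>{1..\<chi>}. finite (A i)"
    and disj: "\<forall>i\<in>{1..\<chi>}. \<forall>j\<in>{1..\<chi>}. i \<noteq> j \<longrightarrow> A i \<inter> A j = {}"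
    and size: "\<forall>i\<in>{1..\<chi> - 1}. card (A i) > (\<chi> - 1) * (k - 2) + q"
    and cardt: "card (A \<chi>) = t"
    and small: "n \<le> q + n div (k-1)"
  shows "\<exists>c. \<not> copy_in k (q + (\<chi>-1)*(n-1)) c True (loose_cycle k n) \<and>
    \<not> copy_in k (q + (\<chi>-1)*(n-1)) c False (\<Union>i\<in>{1..\<chi>}. A i,
            {e. e \<subseteq> (\<Union>i\<in>{1..\<chi>}. A i) \<and> card e = k \<and> (\<exists>i\<in>{1..\<chi>}. card (e \<inter> A i) = k - 1)})"
proof -
  have n: "n \<ge> 2" using n3 k by simp
  define c where "c e = (\<exists>j\<in>{1..\<chi>-1}. e \<subseteq> Vp q n j)" for e
  have red: "\<not> copy_in k (q + (\<chi>-1)*(n-1)) c True (loose_cycle k n)"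
  proof
    assume "copy_in k (q + (\<chi>-1)*(n-1)) c True (loose_cycle k n)"
    then obtain L E cc where cy: "cyc k n (q + (\<chi>-1)*(n-1)) c L E cc"
      using red_cycle_struct[OF _ k nm n3] by blast
    have "\<forall>i<L. \<exists>j\<in>{1..\<chi>-1}. E i \<subseteq> Vp q n j" using cyc_facts(3)[OF cy] unfolding c_def by blast
    then show False by (rule allV_false[OF cy k n])
  qed
  define L where "L = n div (k-1)"
  have nL: "n = L*(k-1)" using nm div_mult_mod_eq[of n "k-1"] unfolding L_def by simp
  have L3: "L \<ge> 3" unfolding L_def using n3 k by (simp add: less_eq_div_iff_mult_less_eq)
  have "k-1 = (k-2)+1" using k by simp
  then have "L*(k-1) = L*((k-2)+1)" by simp
  also have "\<dots> = L*(k-2) + L" by (simp add: distrib_left)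
  finally have "L*(k-1) = L*(k-2) + L" .
  then have Lq: "L*(k-2) \<le> q" using small nL unfolding L_def[symmetric] by linarith
  have "3*(k-2) \<le> L*(k-2)" using L3 by (rule mult_le_mono1)
  moreover have "k \<le> 3*(k-2)" using k by simp
  ultimately have qk: "k \<le> q" using Lq by linarith
  have "q \<le> q choose (k-1)" by (rule upper_le_binomial) (use k qk in auto)
  then have qchi: "q \<le> \<chi> - 1" using chiq by simp
  have k2: "1 \<le> k-2" using k by simp
  have "L*1 \<le> L*(k-2)" using k2 by (rule mult_le_mono2)
  moreover have "(\<chi>-1)*1 \<le> (\<chi>-1)*(k-2)" using k2 by (rule mult_le_mono2)
  ultimately have Lchi: "L \<le> (\<chi>-1)*(k-2)" using Lq qchi by linarith
  have Ai: "card (A i) \<ge> n + 1" if "i \<in> {1..\<chi>-1}" for i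
    using size that Lchi small unfolding L_def by fastforce
  have blue: "\<not> copy_in k (q + (\<chi>-1)*(n-1)) c False (\<Union>i\<in>{1..\<chi>}. A i,
            {e. e \<subseteq> (\<Union>i\<in>{1..\<chi>}. A i) \<and> card e = k \<and> (\<exists>i\<in>{1..\<chi>}. card (e \<inter> A i) = k - 1)})"
  proof
    assume "copy_in k (q + (\<chi>-1)*(n-1)) c False (\<Union>i\<in>{1..\<chi>}. A i,
            {e. e \<subseteq> (\<Union>i\<in>{1..\<chi>}. A i) \<and> card e = k \<and> (\<exists>i\<in>{1..\<chi>}. card (e \<inter> A i) = k - 1)})"
    then obtain g where g: "inj_on g (\<Union>i\<in>{1..\<chi>}. A i)" "g ` (\<Union>i\<in>{1..\<chi>}. A i) \<subseteq> {..<q + (\<chi>-1)*(n-1)}"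
      by (rule blue_unfold)
    have "card (\<Union>i\<in>{1..\<chi>}. A i) = card (g ` (\<Union>i\<in>{1..\<chi>}. A i))" using card_image[OF g(1)] by simp
    also have "\<dots> \<le> card {..<q + (\<chi>-1)*(n-1)}" by (rule card_mono[OF _ g(2)]) simp
    finally have up: "card (\<Union>i\<in>{1..\<chi>}. A i) \<le> q + (\<chi>-1)*(n-1)" by simp
    have "card (\<Union>i\<in>{1..\<chi>}. A i) = (\<Sum>i\<in>{1..\<chi>}. card (A i))"
      by (rule card_UN_disjoint) (use fin disj in auto)
    also have "\<dots> = card (A \<chi>) + (\<Sum>i\<in>{1..\<chi>-1}. card (A i))"
    proof -
      have "{1..\<chi>} = insert \<chi> {1..\<chi>-1}" using chi by auto
      moreover have "\<chi> \<notin> {1..\<chi>-1}" using chi by auto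
      ultimately show ?thesis by (simp add: sum.insert)
    qed
    also have "\<dots> \<ge> t + (\<Sum>i\<in>{1..\<chi>-1}. (n+1))"
      using sum_mono[of "{1..\<chi>-1}" "\<lambda>i. n+1" "\<lambda>i. card (A i)"] Ai cardt by simp
    finally have lo: "card (\<Union>i\<in>{1..\<chi>}. A i) \<ge> t + (\<chi>-1)*(n+1)" by simp
    have "n+1 = (n-1)+2" using n by simp
    then have "(\<chi>-1)*(n+1) = (\<chi>-1)*((n-1)+2)" by simp
    also have "\<dots> = (\<chi>-1)*(n-1) + 2*(\<chi>-1)" by (simp add: distrib_left)
    finally have "(\<chi>-1)*(n+1) = (\<chi>-1)*(n-1) + 2*(\<chi>-1)" .
    then have "t + (\<chi>-1)*(n+1) > q + (\<chi>-1)*(n-1)" using qchi t k by linarith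
    then show False using lo up by linarith
  qed
  show ?thesis using red blue by blast
qed

lemma lc_edges:
  assumes k: "k \<ge> 3" and nm: "n mod (k-1) = 0" and n3: "n \<ge> 3*(k-1)"
  shows "\<forall>e\<in>snd (loose_cycle k n). e \<subseteq> fst (loose_cycle k n) \<and> card e = k"
proof
  fix e assume e: "e \<in> snd (loose_cycle k n)"
  define K where "K = k - 1"
  define L where "L = n div K"
  have K: "K \<ge> 1" using k K_def by simp
  have nL: "n = L*K" using nm div_mult_mod_eq[of n K] unfolding L_def K_def by simp
  have L3: "L \<ge> 3" unfolding L_def using n3 K K_def by (simp add: less_eq_div_iff_mult_less_eq)
  have L2: "L \<ge> 2" using L3 by simp
  obtain i where i: "i < L" "e = Pe K n i" using e unfolding lc_snd K_def L_def by blast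
  have "e \<subseteq> {1..n}" using Pe_cover[OF K nL L2] i by blast
  moreover have "card e = k" using Pe_card[OF K nL L2 i(1)] i(2) K_def k by simp
  ultimately show "e \<subseteq> fst (loose_cycle k n) \<and> card e = k" unfolding lc_fst by simp
qed

theorem proposition1p10:
  fixes k t q \<chi> n :: nat and A :: "nat \<Rightarrow> 'a set"
  assumes "k \<ge> 3" and "t \<ge> k - 1" and "q \<ge> k - 1"
    and "\<chi> > q choose (k - 1)"
    and "n \<ge> 3 * (k - 1)" and "n mod (k - 1) = 0"
    and "\<forall>i\<in>{1..\<chi>}. finite (A i)"
    and "\<forall>i\<in>{1..\<chi>}. \<forall>j\<in>{1..\<chi>}. i \<noteq> j \<longrightarrow> A i \<inter> A j = {}"
    and "\<forall>i\<in>{1..\<chi> - 1}. card (A i) > (\<chi> - 1) * (k - 2) + max (tau (k - 1) t) q"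
    and "card (A \<chi>) = t"
  shows "ramsey_number k (loose_cycle k n)
           (\<Union>i\<in>{1..\<chi>}. A i,
            {e. e \<subseteq> (\<Union>i\<in>{1..\<chi>}. A i) \<and> card e = k \<and> (\<exists>i\<in>{1..\<chi>}. card (e \<inter> A i) = k - 1)})
         > (\<chi> - 1) * (n - 1) + max (tau (k - 1) t) q"
proof -
  note k = assms(1) and t = assms(2) and q = assms(3) and chiq = assms(4) and n3 = assms(5)
    and nm = assms(6) and fin = assms(7) and disj = assms(8) and size = assms(9) and cardt = assms(10)
  define H where "H = (\<Union>i\<in>{1..\<chi>}. A i,
            {e. e \<subseteq> (\<Union>i\<in>{1..\<chi>}. A i) \<and> card e = k \<and> (\<exists>i\<in>{1..\<chi>}. card (e \<inter> A i) = k - 1)})"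
  define m where "m = max (tau (k - 1) t) q"
  have "0 < q choose (k-1)" using q by (simp add: zero_less_binomial_iff)
  then have chi: "\<chi> \<ge> 2" using chiq by linarith
  have noarr: "\<exists>c. \<not> copy_in k (m + (\<chi>-1)*(n-1)) c True (loose_cycle k n) \<and>
               \<not> copy_in k (m + (\<chi>-1)*(n-1)) c False H"
  proof (cases "q \<le> tau (k-1) t")
    case True
    then have mt: "m = tau (k-1) t" unfolding m_def by simp
    have size': "\<forall>i\<in>{1..\<chi> - 1}. card (A i) > (\<chi> - 1) * (k - 2) + m" using size unfolding m_def .
    show ?thesis unfolding H_def by (rule case_tau[OF k t chi n3 nm fin disj size' cardt mt])
  next
    case False
    then have mq: "m = q" unfolding m_def by simp
    have size': "\<forall>i\<in>{1..\<chi> - 1}. card (A i) > (\<chi> - 1) * (k - 2) + q" using size mq unfolding m_def by simp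
    show ?thesis
    proof (cases "n > q + n div (k-1)")
      case True
      show ?thesis unfolding H_def mq by (rule case_q1[OF k t chi q chiq n3 nm fin disj size' cardt True])
    next
      case False
      then have sm: "n \<le> q + n div (k-1)" by simp
      show ?thesis unfolding H_def mq by (rule case_q2[OF k t chi q chiq n3 nm fin disj size' cardt sm])
    qed
  qed
  then have na: "\<not> ramsey_arrows k (m + (\<chi>-1)*(n-1)) (loose_cycle k n) H"
    unfolding ramsey_arrows_def by blast
  have finG: "finite (fst (loose_cycle k n))" unfolding lc_fst by simp
  have eG: "\<forall>e\<in>snd (loose_cycle k n). e \<subseteq> fst (loose_cycle k n) \<and> card e = k" by (rule lc_edges[OF k nm n3])
  have finH: "finite (fst H)" unfolding H_def using fin by simp
  have eH: "\<forall>e\<in>snd H. e \<subseteq> fst H \<and> card e = k" unfolding H_def by simp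
  obtain N0 where N0: "ramsey_arrows k N0 (loose_cycle k n) H" using ramsey_exists[OF finG eG finH eH] by blast
  define R where "R = ramsey_number k (loose_cycle k n) H"
  have RA: "ramsey_arrows k R (loose_cycle k n) H" unfolding R_def ramsey_number_def by (rule LeastI[of "\<lambda>N. ramsey_arrows k N (loose_cycle k n) H", OF N0])
  have "R > m + (\<chi>-1)*(n-1)"
  proof (rule ccontr)
    assume "\<not> R > m + (\<chi>-1)*(n-1)"
    then have "R \<le> m + (\<chi>-1)*(n-1)" by simp
    then have "ramsey_arrows k (m + (\<chi>-1)*(n-1)) (loose_cycle k n) H" by (rule ramsey_mono[OF RA])
    then show False using na by simp
  qed
  then show ?thesis unfolding R_def H_def m_def by simp
qed


end
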